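(* Let $R$ be a commutative ring in which $2$ is invertible, $I$ an ideal of $R$, and let $Q$ be a free $R$-module of rank $n$ with a fixed ordered basis. Let $\varphi'$ and $\varphi^*$ be invertible symmetric $n\times n$ matrices defining quadratic forms on $Q$ (quadratic spaces $Q_{\varphi'}$, $Q_{\varphi^*}$), with $\varphi'=\epsilon^t\varphi^*\epsilon$ for some $\epsilon\in\mathrm{GL}_n(R)$. Let $m\ge1$ and identify automorphisms of $Q\perp\mathbb{H}(R)^m$ with $(n+2m)\times(n+2m)$ matrices via the basis of $Q$ followed by $x_1,\dots,x_m,f_1,\dots,f_m$. Then $\mathrm{EO}_{(R,I)}(Q_{\varphi'},\mathbb{H}(R)^m)=(\epsilon^{-1}\perp I_{2m})\,\mathrm{EO}_{(R,I)}(Q_{\varphi^*},\mathbb{H}(R)^m)\,(\epsilon\perp I_{2m})$.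
   Context: For an invertible symmetric matrix $\varphi$ on $Q$, $\langle a,b\rangle_\varphi=a^t\varphi b$ in coordinates and $q_\varphi(a)=\tfrac12\langle a,a\rangle_\varphi$. $\mathbb{H}(R)^m=\mathbb{H}(P)$, $P=R^m$, $\mathbb{H}(P)=P\oplus P^*$ with basis $x_1,\dots,x_m$, dual basis $f_1,\dots,f_m$, form $q(y,g)=g(y)$. DSER transformations on $Q_\varphi\perp\mathbb{H}(P)$: for $\alpha:Q\to P$ let $\alpha^*:P^*\to Q$ satisfy $\langle\alpha^*(g),z\rangle_\varphi=g(\alpha(z))$, $E_\alpha(z,y,g)=(z-\alpha^*(g),y+\alpha(z)-\tfrac12\alpha\alpha^*(g),g)$; for $\beta:Q\to P^*$ let $\beta^*:P\to Q$ satisfy $\langle\beta^*(y),z\rangle_\varphi=\beta(z)(y)$, $E^*_\beta(z,y,g)=(z-\beta^*(y),y,g+\beta(z)-\tfrac12\beta\beta^*(y))$. $\mathrm{EO}_R(Q_\varphi,\mathbb{H}(P))$ is generated by all $E_\alpha,E^*_\beta$; $\mathrm{EO}_I(Q_\varphi,\mathbb{H}(P))$ by those with $\alpha(Q)\subseteq IP$, $\beta(Q)\subseteq IP^*$; $\mathrm{EO}_{(R,I)}(Q_\varphi,\mathbb{H}(P))$ is the normal closure of $\mathrm{EO}_I(Q_\varphi,\mathbb{H}(P))$ in $\mathrm{EO}_R(Q_\varphi,\mathbb{H}(P))$. *)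

theory Defs
  imports "Jordan_Normal_Form.Matrix"
begin

definition is_ideal :: "'a::comm_ring_1 set \<Rightarrow> bool" where
  "is_ideal I \<longleftrightarrow> 0 \<in> I \<and> (\<forall>a\<in>I. \<forall>b\<in>I. a + b \<in> I) \<and> (\<forall>r a. a \<in> I \<longrightarrow> r * a \<in> I)"

(* 1/2, meaningful when 2 is invertible *)
definition half :: "'a::comm_ring_1" where
  "half = (THE u. 2 * u = 1)"

definition bform :: "'a::comm_ring_1 mat \<Rightarrow> 'a vec \<Rightarrow> 'a vec \<Rightarrow> 'a" where
  "bform \<phi> a b = a \<bullet> (\<phi> *\<^sub>v b)"

(* J P = {y in R^m : all coordinates in J}; also used for J P^* w.r.t. the dual basis *)
definition ideal_vecs :: "nat \<Rightarrow> 'a set \<Rightarrow> 'a vec set" where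
  "ideal_vecs m J = {y \<in> carrier_vec m. \<forall>i<m. y $ i \<in> J}"

(* alpha : Q -> P given by an m x n matrix A; alpha^* : P^* -> Q (n x m matrix),
   <alpha^*(g), z>_phi = g(alpha z), where g in P^* has coordinates w.r.t. f_1..f_m *)
definition adj_alpha :: "'a::comm_ring_1 mat \<Rightarrow> nat \<Rightarrow> nat \<Rightarrow> 'a mat \<Rightarrow> 'a mat" where
  "adj_alpha \<phi> n m A = (THE M. M \<in> carrier_mat n m \<and>
     (\<forall>g\<in>carrier_vec m. \<forall>z\<in>carrier_vec n. bform \<phi> (M *\<^sub>v g) z = g \<bullet> (A *\<^sub>v z)))"

(* beta : Q -> P^* given by an m x n matrix B; beta^* : P -> Q,
   <beta^*(y), z>_phi = beta(z)(y) *)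
definition adj_beta :: "'a::comm_ring_1 mat \<Rightarrow> nat \<Rightarrow> nat \<Rightarrow> 'a mat \<Rightarrow> 'a mat" where
  "adj_beta \<phi> n m B = (THE M. M \<in> carrier_mat n m \<and>
     (\<forall>y\<in>carrier_vec m. \<forall>z\<in>carrier_vec n. bform \<phi> (M *\<^sub>v y) z = (B *\<^sub>v z) \<bullet> y))"

(* coordinates of Q _|_ H(P) = R^(n+2m): basis of Q, then x_1..x_m, then f_1..f_m *)
definition cz :: "nat \<Rightarrow> nat \<Rightarrow> 'a vec \<Rightarrow> 'a vec" where
  "cz n m v = vec n (\<lambda>i. v $ i)"
definition cy :: "nat \<Rightarrow> nat \<Rightarrow> 'a vec \<Rightarrow> 'a vec" where
  "cy n m v = vec m (\<lambda>i. v $ (n + i))"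
definition cg :: "nat \<Rightarrow> nat \<Rightarrow> 'a vec \<Rightarrow> 'a vec" where
  "cg n m v = vec m (\<lambda>i. v $ (n + m + i))"
definition join :: "nat \<Rightarrow> nat \<Rightarrow> 'a vec \<Rightarrow> 'a vec \<Rightarrow> 'a vec \<Rightarrow> 'a vec" where
  "join n m z y g = vec (n + 2 * m)
     (\<lambda>i. if i < n then z $ i else if i < n + m then y $ (i - n) else g $ (i - n - m))"

definition E_alpha :: "'a::comm_ring_1 mat \<Rightarrow> nat \<Rightarrow> nat \<Rightarrow> 'a mat \<Rightarrow> 'a vec \<Rightarrow> 'a vec" where
  "E_alpha \<phi> n m A v =
     (let z = cz n m v; y = cy n m v; g = cg n m v; As = adj_alpha \<phi> n m A in
      join n m (z - As *\<^sub>v g) (y + A *\<^sub>v z - half \<cdot>\<^sub>v (A *\<^sub>v (As *\<^sub>v g))) g)"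

definition E_beta :: "'a::comm_ring_1 mat \<Rightarrow> nat \<Rightarrow> nat \<Rightarrow> 'a mat \<Rightarrow> 'a vec \<Rightarrow> 'a vec" where
  "E_beta \<phi> n m B v =
     (let z = cz n m v; y = cy n m v; g = cg n m v; Bs = adj_beta \<phi> n m B in
      join n m (z - Bs *\<^sub>v y) y (g + B *\<^sub>v z - half \<cdot>\<^sub>v (B *\<^sub>v (Bs *\<^sub>v y))))"

definition lin_mat :: "nat \<Rightarrow> ('a::comm_ring_1 vec \<Rightarrow> 'a vec) \<Rightarrow> 'a mat" where
  "lin_mat N f = mat N N (\<lambda>(i, j). f (unit_vec N j) $ i)"

inductive_set gen_group :: "nat \<Rightarrow> 'a::comm_ring_1 mat set \<Rightarrow> 'a mat set"
  for N :: nat and S :: "'a mat set" where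
  gen_one: "1\<^sub>m N \<in> gen_group N S"
| gen_mult: "s \<in> S \<Longrightarrow> x \<in> gen_group N S \<Longrightarrow> s * x \<in> gen_group N S"
| gen_inv: "s \<in> S \<Longrightarrow> t \<in> carrier_mat N N \<Longrightarrow> s * t = 1\<^sub>m N \<Longrightarrow> t * s = 1\<^sub>m N \<Longrightarrow>
            x \<in> gen_group N S \<Longrightarrow> t * x \<in> gen_group N S"

definition normal_closure :: "nat \<Rightarrow> 'a::comm_ring_1 mat set \<Rightarrow> 'a mat set \<Rightarrow> 'a mat set" where
  "normal_closure N G H = gen_group N
     {g * h * g' | g h g'. g \<in> G \<and> h \<in> H \<and> g' \<in> carrier_mat N N \<and> g * g' = 1\<^sub>m N \<and> g' * g = 1\<^sub>m N}"

(* generators of EO_J(Q_phi, H(R^m)); J = UNIV gives EO_R *)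
definition EO_gens :: "'a::comm_ring_1 mat \<Rightarrow> nat \<Rightarrow> nat \<Rightarrow> 'a set \<Rightarrow> 'a mat set" where
  "EO_gens \<phi> n m J =
     {lin_mat (n + 2 * m) (E_alpha \<phi> n m A) | A. A \<in> carrier_mat m n \<and>
        (\<forall>z\<in>carrier_vec n. A *\<^sub>v z \<in> ideal_vecs m J)}
   \<union> {lin_mat (n + 2 * m) (E_beta \<phi> n m B) | B. B \<in> carrier_mat m n \<and>
        (\<forall>z\<in>carrier_vec n. B *\<^sub>v z \<in> ideal_vecs m J)}"

definition EO :: "'a::comm_ring_1 mat \<Rightarrow> nat \<Rightarrow> nat \<Rightarrow> 'a set \<Rightarrow> 'a mat set" where
  "EO \<phi> n m J = gen_group (n + 2 * m) (EO_gens \<phi> n m J)"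

definition EO_rel :: "'a::comm_ring_1 mat \<Rightarrow> nat \<Rightarrow> nat \<Rightarrow> 'a set \<Rightarrow> 'a mat set" where
  "EO_rel \<phi> n m I = normal_closure (n + 2 * m) (EO \<phi> n m UNIV) (EO \<phi> n m I)"

definition perp_id :: "nat \<Rightarrow> nat \<Rightarrow> 'a::comm_ring_1 mat \<Rightarrow> 'a mat" where
  "perp_id n m e = four_block_mat e (0\<^sub>m n (2 * m)) (0\<^sub>m (2 * m) n) (1\<^sub>m (2 * m))"

end

theory Submission
  imports Defs
begin


definition matlin :: "nat \<Rightarrow> nat \<Rightarrow> ('a::comm_ring_1 vec \<Rightarrow> 'a vec) \<Rightarrow> bool" where
 "matlin N k f \<longleftrightarrow> (\<exists>M\<in>carrier_mat k N. \<forall>v\<in>carrier_vec N. f v = M *\<^sub>v v)"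

lemma smult_mat_vec: assumes "A \<in> carrier_mat k N" "v \<in> carrier_vec N"
  shows "(c \<cdot>\<^sub>m A) *\<^sub>v v = c \<cdot>\<^sub>v (A *\<^sub>v (v::'a::comm_ring_1 vec))"
  using assms by (intro eq_vecI) auto

lemma matlin_mult: assumes "matlin N k f" "X \<in> carrier_mat l k"
  shows "matlin N l (\<lambda>v. X *\<^sub>v f v)"
proof -
  from assms(1) obtain M where M: "M \<in> carrier_mat k N" "\<forall>v\<in>carrier_vec N. f v = M *\<^sub>v v"
    unfolding matlin_def by auto
  show ?thesis unfolding matlin_def
    by (rule bexI[of _ "X * M"]) (use M assms(2) in auto)
qed

lemma matlin_add: assumes "matlin N k f" "matlin N k g"
  shows "matlin N k (\<lambda>v. f v + g v)"
proof -
  from assms(1) obtain M where M: "M \<in> carrier_mat k N" "\<forall>v\<in>carrier_vec N. f v = M *\<^sub>v v"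
    unfolding matlin_def by auto
  from assms(2) obtain M2 where M2: "M2 \<in> carrier_mat k N" "\<forall>v\<in>carrier_vec N. g v = M2 *\<^sub>v v"
    unfolding matlin_def by auto
  show ?thesis unfolding matlin_def
    by (rule bexI[of _ "M + M2"]) (use M M2 in \<open>auto simp: add_mult_distrib_mat_vec[of M k N M2]\<close>)
qed

lemma matlin_minus: assumes "matlin N k f" "matlin N k g"
  shows "matlin N k (\<lambda>v. f v - g v)"
proof -
  from assms(1) obtain M where M: "M \<in> carrier_mat k N" "\<forall>v\<in>carrier_vec N. f v = M *\<^sub>v v"
    unfolding matlin_def by auto
  from assms(2) obtain M2 where M2: "M2 \<in> carrier_mat k N" "\<forall>v\<in>carrier_vec N. g v = M2 *\<^sub>v v"
    unfolding matlin_def by auto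
  show ?thesis unfolding matlin_def
    by (rule bexI[of _ "M - M2"]) (use M M2 in \<open>auto simp: minus_mult_distrib_mat_vec[of M k N M2]\<close>)
qed

lemma matlin_smult: assumes "matlin N k f"
  shows "matlin N k (\<lambda>v. c \<cdot>\<^sub>v f v)"
proof -
  from assms(1) obtain M where M: "M \<in> carrier_mat k N" "\<forall>v\<in>carrier_vec N. f v = M *\<^sub>v v"
    unfolding matlin_def by auto
  show ?thesis unfolding matlin_def
    by (rule bexI[of _ "c \<cdot>\<^sub>m M"]) (use M in \<open>auto simp: smult_mat_vec\<close>)
qed

lemma matlin_sel: assumes "\<forall>i<k. h i < N"
  shows "matlin N k (\<lambda>v::'a::comm_ring_1 vec. vec k (\<lambda>i. v $ h i))"
proof -
  let ?M = "mat k N (\<lambda>(i,j). if j = h i then 1 else 0) :: 'a mat"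
  have r: "row ?M i = unit_vec N (h i)" if "i < k" for i
    using that assms by (intro eq_vecI) (auto simp: unit_vec_def)
  show ?thesis unfolding matlin_def
  proof (rule bexI[of _ ?M], intro ballI eq_vecI)
    fix v i assume v: "v \<in> carrier_vec N" and i: "i < dim_vec (?M *\<^sub>v v)"
    then have i': "i < k" by simp
    have "(?M *\<^sub>v v) $ i = row ?M i \<bullet> v" by (rule index_mult_mat_vec) (use i' in simp)
    also have "\<dots> = v $ h i" unfolding r[OF i'] using scalar_prod_left_unit[of v N "h i"] v assms i' by simp
    finally show "vec k (\<lambda>i. v $ h i) $ i = (?M *\<^sub>v v) $ i" using i' by simp
  qed auto
qed

lemma join_append: assumes "z \<in> carrier_vec n" "y \<in> carrier_vec m" "g \<in> carrier_vec m"
  shows "join n m z y g = z @\<^sub>v (y @\<^sub>v g)"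
  using assms unfolding join_def by (intro eq_vecI) auto

lemma matlin_join: assumes "matlin N n f" "matlin N m g1" "matlin N m g2"
  shows "matlin N (n + 2*m) (\<lambda>v. join n m (f v) (g1 v) (g2 v))"
proof -
  from assms(1) obtain M where M: "M \<in> carrier_mat n N" "\<forall>v\<in>carrier_vec N. f v = M *\<^sub>v v"
    unfolding matlin_def by auto
  from assms(2) obtain M2 where M2: "M2 \<in> carrier_mat m N" "\<forall>v\<in>carrier_vec N. g1 v = M2 *\<^sub>v v"
    unfolding matlin_def by auto
  from assms(3) obtain M3 where M3: "M3 \<in> carrier_mat m N" "\<forall>v\<in>carrier_vec N. g2 v = M3 *\<^sub>v v"
    unfolding matlin_def by auto
  have c: "M @\<^sub>r (M2 @\<^sub>r M3) \<in> carrier_mat (n + 2*m) N" using M M2 M3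
    by (metis carrier_append_rows mult_2)
  show ?thesis unfolding matlin_def
    apply (rule bexI[OF _ c])
    using M M2 M3 by (auto simp: join_append mat_mult_append[OF M2(1) M3(1)]
        mat_mult_append[OF M(1) carrier_append_rows[OF M2(1) M3(1)]])
qed

lemma lin_mat_eq: assumes "M \<in> carrier_mat N N" "\<forall>v\<in>carrier_vec N. f v = M *\<^sub>v v"
  shows "lin_mat N f = M"
  using assms unfolding lin_mat_def by (intro eq_matI) auto

lemma matlin_lin_mat: assumes "matlin N N f"
  shows "lin_mat N f \<in> carrier_mat N N" "\<And>v. v \<in> carrier_vec N \<Longrightarrow> f v = lin_mat N f *\<^sub>v v"
proof -
  from assms(1) obtain M where M: "M \<in> carrier_mat N N" "\<forall>v\<in>carrier_vec N. f v = M *\<^sub>v v"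
    unfolding matlin_def by auto
  then have "lin_mat N f = M" by (rule lin_mat_eq)
  then show "lin_mat N f \<in> carrier_mat N N" "\<And>v. v \<in> carrier_vec N \<Longrightarrow> f v = lin_mat N f *\<^sub>v v"
    using M by auto
qed

lemma matlin_E_alpha: assumes "A \<in> carrier_mat m n" "adj_alpha \<phi> n m A \<in> carrier_mat n m"
  shows "matlin (n+2*m) (n+2*m) (E_alpha \<phi> n m A)"
proof -
  let ?N = "n+2*m"
  have z: "matlin ?N n (cz n m)" unfolding cz_def by (rule matlin_sel) auto
  have y: "matlin ?N m (cy n m)" unfolding cy_def by (rule matlin_sel) auto
  have g: "matlin ?N m (cg n m)" unfolding cg_def by (rule matlin_sel) auto
  show ?thesis unfolding E_alpha_def Let_def
    apply (rule matlin_join)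
      apply (rule matlin_minus[OF z matlin_mult[OF g assms(2)]])
     apply (rule matlin_minus[OF matlin_add[OF y matlin_mult[OF z assms(1)]]])
     apply (rule matlin_smult)
     apply (rule matlin_mult[OF matlin_mult[OF g assms(2)] assms(1)])
    apply (rule g)
    done
qed

lemma matlin_E_beta: assumes "B \<in> carrier_mat m n" "adj_beta \<phi> n m B \<in> carrier_mat n m"
  shows "matlin (n+2*m) (n+2*m) (E_beta \<phi> n m B)"
proof -
  let ?N = "n+2*m"
  have z: "matlin ?N n (cz n m)" unfolding cz_def by (rule matlin_sel) auto
  have y: "matlin ?N m (cy n m)" unfolding cy_def by (rule matlin_sel) auto
  have g: "matlin ?N m (cg n m)" unfolding cg_def by (rule matlin_sel) auto
  show ?thesis unfolding E_beta_def Let_def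
    apply (rule matlin_join)
      apply (rule matlin_minus[OF z matlin_mult[OF y assms(2)]])
     apply (rule y)
     apply (rule matlin_minus[OF matlin_add[OF g matlin_mult[OF z assms(1)]]])
     apply (rule matlin_smult)
     apply (rule matlin_mult[OF matlin_mult[OF y assms(2)] assms(1)])
    done
qed




lemma vec_eq_by_dot: fixes a b :: "'a::comm_ring_1 vec"
  assumes "a \<in> carrier_vec n" "b \<in> carrier_vec n" "\<forall>w\<in>carrier_vec n. a \<bullet> w = b \<bullet> w"
  shows "a = b"
proof (rule eq_vecI)
  fix i assume "i < dim_vec b"
  then have i: "i < n" using assms by simp
  have "a \<bullet> unit_vec n i = b \<bullet> unit_vec n i" using assms(3) by simp
  then show "a $ i = b $ i" using i by simp
qed (use assms in simp)

lemma mat_unit_entry: fixes M :: "'a::comm_ring_1 mat"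
  assumes "M \<in> carrier_mat n m" "i < n" "j < m"
  shows "(M *\<^sub>v unit_vec m j) $ i = M $$ (i,j)"
proof -
  have "(M *\<^sub>v unit_vec m j) $ i = row M i \<bullet> unit_vec m j"
    by (rule index_mult_mat_vec) (use assms in simp)
  also have "\<dots> = M $$ (i,j)" using assms by simp
  finally show ?thesis .
qed

lemma mat_eq_by_vec: fixes M M' :: "'a::comm_ring_1 mat"
  assumes "M \<in> carrier_mat n m" "M' \<in> carrier_mat n m" "\<forall>g\<in>carrier_vec m. M *\<^sub>v g = M' *\<^sub>v g"
  shows "M = M'"
proof (rule eq_matI)
  fix i j assume "i < dim_row M'" "j < dim_col M'"
  then have ij: "i < n" "j < m" using assms by auto
  show "M $$ (i,j) = M' $$ (i,j)"
    using mat_unit_entry[OF assms(1) ij] mat_unit_entry[OF assms(2) ij] assms(3) by simp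
qed (use assms in auto)

definition adjP :: "'a::comm_ring_1 mat \<Rightarrow> nat \<Rightarrow> nat \<Rightarrow> 'a mat \<Rightarrow> 'a mat \<Rightarrow> bool" where
  "adjP \<phi> n m A M \<longleftrightarrow> M \<in> carrier_mat n m \<and>
     (\<forall>g\<in>carrier_vec m. \<forall>z\<in>carrier_vec n. bform \<phi> (M *\<^sub>v g) z = g \<bullet> (A *\<^sub>v z))"

lemma adj_unique:
  fixes \<phi> :: "'a::comm_ring_1 mat"
  assumes phi: "\<phi> \<in> carrier_mat n n" and psi: "\<psi> \<in> carrier_mat n n" and inv: "\<phi> * \<psi> = 1\<^sub>m n"
    and M: "adjP \<phi> n m A M" and M': "adjP \<phi> n m A M'"
  shows "M = M'"
proof (rule mat_eq_by_vec[of M n m M'])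
  show "M \<in> carrier_mat n m" "M' \<in> carrier_mat n m" using M M' unfolding adjP_def by auto
  show "\<forall>g\<in>carrier_vec m. M *\<^sub>v g = M' *\<^sub>v g"
  proof
    fix g :: "'a vec" assume g: "g \<in> carrier_vec m"
    show "M *\<^sub>v g = M' *\<^sub>v g"
    proof (rule vec_eq_by_dot[of _ n])
      show "M *\<^sub>v g \<in> carrier_vec n" "M' *\<^sub>v g \<in> carrier_vec n"
        using M M' g unfolding adjP_def by auto
      show "\<forall>w\<in>carrier_vec n. (M *\<^sub>v g) \<bullet> w = (M' *\<^sub>v g) \<bullet> w"
      proof
        fix w :: "'a vec" assume w: "w \<in> carrier_vec n"
        have pw: "\<phi> *\<^sub>v (\<psi> *\<^sub>v w) = w"
          using assoc_mult_mat_vec[OF phi psi w, symmetric] inv w by simp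
        have "(M *\<^sub>v g) \<bullet> w = bform \<phi> (M *\<^sub>v g) (\<psi> *\<^sub>v w)" unfolding bform_def pw ..
        also have "\<dots> = g \<bullet> (A *\<^sub>v (\<psi> *\<^sub>v w))" using M g psi w unfolding adjP_def by auto
        also have "\<dots> = bform \<phi> (M' *\<^sub>v g) (\<psi> *\<^sub>v w)" using M' g psi w unfolding adjP_def by auto
        also have "\<dots> = (M' *\<^sub>v g) \<bullet> w" unfolding bform_def pw ..
        finally show "(M *\<^sub>v g) \<bullet> w = (M' *\<^sub>v g) \<bullet> w" .
      qed
    qed
  qed
qed

lemma adj_exists:
  fixes \<phi> :: "'a::comm_ring_1 mat"
  assumes phi: "\<phi> \<in> carrier_mat n n" and sym: "transpose_mat \<phi> = \<phi>"
    and psi: "\<psi> \<in> carrier_mat n n" and inv: "\<phi> * \<psi> = 1\<^sub>m n" and A: "A \<in> carrier_mat m n"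
  shows "adjP \<phi> n m A (\<psi> * transpose_mat A)"
  unfolding adjP_def
proof (intro conjI ballI)
  show "\<psi> * transpose_mat A \<in> carrier_mat n m" using psi A by auto
  fix g z :: "'a vec" assume g: "g \<in> carrier_vec m" and z: "z \<in> carrier_vec n"
  have c: "\<psi> *\<^sub>v (transpose_mat A *\<^sub>v g) \<in> carrier_vec n" using psi A g by auto
  have "bform \<phi> ((\<psi> * transpose_mat A) *\<^sub>v g) z = (\<psi> *\<^sub>v (transpose_mat A *\<^sub>v g)) \<bullet> (\<phi> *\<^sub>v z)"
    unfolding bform_def using psi A g by simp
  also have "\<dots> = (transpose_mat \<phi> *\<^sub>v (\<psi> *\<^sub>v (transpose_mat A *\<^sub>v g))) \<bullet> z"
    by (rule transpose_vec_mult_scalar[OF phi z c, symmetric])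
  also have "transpose_mat \<phi> *\<^sub>v (\<psi> *\<^sub>v (transpose_mat A *\<^sub>v g)) = transpose_mat A *\<^sub>v g"
    unfolding sym using assoc_mult_mat_vec[OF phi psi, of "transpose_mat A *\<^sub>v g", symmetric] inv A g by simp
  also have "(transpose_mat A *\<^sub>v g) \<bullet> z = g \<bullet> (A *\<^sub>v z)"
    by (rule transpose_vec_mult_scalar[OF A z g])
  finally show "bform \<phi> ((\<psi> * transpose_mat A) *\<^sub>v g) z = g \<bullet> (A *\<^sub>v z)" .
qed

lemma adj_alpha_THE: "adj_alpha \<phi> n m A = (THE M. adjP \<phi> n m A M)"
  unfolding adj_alpha_def adjP_def ..

lemma adj_alpha_char:
  assumes phi: "\<phi> \<in> carrier_mat n n" and sym: "transpose_mat \<phi> = \<phi>"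
    and psi: "\<psi> \<in> carrier_mat n n" and inv: "\<phi> * \<psi> = 1\<^sub>m n" and A: "A \<in> carrier_mat m n"
  shows "adjP \<phi> n m A (adj_alpha \<phi> n m A)"
  unfolding adj_alpha_THE
  by (rule theI[where P = "adjP \<phi> n m A", OF adj_exists[OF assms]]) (erule adj_unique[OF phi psi inv _ adj_exists[OF assms]])

lemma adj_alpha_unique:
  assumes phi: "\<phi> \<in> carrier_mat n n" and sym: "transpose_mat \<phi> = \<phi>"
    and psi: "\<psi> \<in> carrier_mat n n" and inv: "\<phi> * \<psi> = 1\<^sub>m n" and A: "A \<in> carrier_mat m n"
    and M: "adjP \<phi> n m A M"
  shows "adj_alpha \<phi> n m A = M"
  using adj_unique[OF phi psi inv adj_alpha_char[OF assms(1-5)] M] .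

lemma adj_beta_eq: assumes B: "B \<in> carrier_mat m n"
  shows "adj_beta \<phi> n m B = adj_alpha \<phi> n m B"
proof -
  have "\<And>M. (\<forall>y\<in>carrier_vec m. \<forall>z\<in>carrier_vec n. bform \<phi> (M *\<^sub>v y) z = (B *\<^sub>v z) \<bullet> y)
     = (\<forall>y\<in>carrier_vec m. \<forall>z\<in>carrier_vec n. bform \<phi> (M *\<^sub>v y) z = y \<bullet> (B *\<^sub>v z))"
    using B comm_scalar_prod[of "B *\<^sub>v _" m] by auto
  then show ?thesis unfolding adj_beta_def adj_alpha_def by simp
qed

lemma adj_transform:
  fixes \<phi>s :: "'a::comm_ring_1 mat"
  assumes phis: "\<phi>s \<in> carrier_mat n n" and syms: "transpose_mat \<phi>s = \<phi>s"
    and psis: "\<psi>s \<in> carrier_mat n n" and invs: "\<phi>s * \<psi>s = 1\<^sub>m n"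
    and phi': "\<phi>' \<in> carrier_mat n n" and sym': "transpose_mat \<phi>' = \<phi>'"
    and psi': "\<psi>' \<in> carrier_mat n n" and inv': "\<phi>' * \<psi>' = 1\<^sub>m n"
    and eps: "\<epsilon> \<in> carrier_mat n n" and epsinv: "\<epsilon>inv \<in> carrier_mat n n"
    and ei: "\<epsilon> * \<epsilon>inv = 1\<^sub>m n" "\<epsilon>inv * \<epsilon> = 1\<^sub>m n"
    and congr: "\<phi>' = transpose_mat \<epsilon> * \<phi>s * \<epsilon>"
    and A: "A \<in> carrier_mat m n"
  shows "adj_alpha \<phi>' n m A = \<epsilon>inv * adj_alpha \<phi>s n m (A * \<epsilon>inv)"
proof (rule adj_alpha_unique[OF phi' sym' psi' inv' A])
  have A': "A * \<epsilon>inv \<in> carrier_mat m n" using A epsinv by auto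
  note M0 = adj_alpha_char[OF phis syms psis invs A']
  define M0 where "M0 = adj_alpha \<phi>s n m (A * \<epsilon>inv)"
  have M0c: "M0 \<in> carrier_mat n m" using M0 unfolding adjP_def M0_def by auto
  show "adjP \<phi>' n m A (\<epsilon>inv * M0)"
    unfolding adjP_def
  proof (intro conjI ballI)
    show "\<epsilon>inv * M0 \<in> carrier_mat n m" using epsinv M0c by auto
    fix g z :: "'a vec" assume g: "g \<in> carrier_vec m" and z: "z \<in> carrier_vec n"
    have a: "M0 *\<^sub>v g \<in> carrier_vec n" using M0c g by auto
    have b: "\<phi>s *\<^sub>v (\<epsilon> *\<^sub>v z) \<in> carrier_vec n" using phis eps z by auto
    have ee: "\<epsilon> *\<^sub>v (\<epsilon>inv *\<^sub>v (M0 *\<^sub>v g)) = M0 *\<^sub>v g"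
      using assoc_mult_mat_vec[OF eps epsinv a, symmetric] ei a by simp
    have ee2: "\<epsilon>inv *\<^sub>v (\<epsilon> *\<^sub>v z) = z"
      using assoc_mult_mat_vec[OF epsinv eps z, symmetric] ei z by simp
    have "bform \<phi>' ((\<epsilon>inv * M0) *\<^sub>v g) z
        = (\<epsilon>inv *\<^sub>v (M0 *\<^sub>v g)) \<bullet> (transpose_mat \<epsilon> *\<^sub>v (\<phi>s *\<^sub>v (\<epsilon> *\<^sub>v z)))"
      unfolding bform_def congr using eps epsinv phis M0c g z
      by (simp add: assoc_mult_mat_vec[of "transpose_mat \<epsilon> * \<phi>s" n n \<epsilon> n z]
          assoc_mult_mat_vec[of "transpose_mat \<epsilon>" n n \<phi>s n "\<epsilon> *\<^sub>v z"]
          del: assoc_mult_mat)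
    also have "\<dots> = (transpose_mat \<epsilon> *\<^sub>v (\<phi>s *\<^sub>v (\<epsilon> *\<^sub>v z))) \<bullet> (\<epsilon>inv *\<^sub>v (M0 *\<^sub>v g))"
      by (rule comm_scalar_prod[of _ n]) (use eps epsinv phis M0c g z in auto)
    also have "\<dots> = (\<phi>s *\<^sub>v (\<epsilon> *\<^sub>v z)) \<bullet> (\<epsilon> *\<^sub>v (\<epsilon>inv *\<^sub>v (M0 *\<^sub>v g)))"
      by (rule transpose_vec_mult_scalar[OF eps _ b]) (use epsinv a in auto)
    also have "\<dots> = (M0 *\<^sub>v g) \<bullet> (\<phi>s *\<^sub>v (\<epsilon> *\<^sub>v z))"
      unfolding ee by (rule comm_scalar_prod[OF b a])
    also have "\<dots> = bform \<phi>s (M0 *\<^sub>v g) (\<epsilon> *\<^sub>v z)" unfolding bform_def ..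
    also have "\<dots> = g \<bullet> ((A * \<epsilon>inv) *\<^sub>v (\<epsilon> *\<^sub>v z))"
      using M0 g eps z unfolding adjP_def M0_def by auto
    also have "(A * \<epsilon>inv) *\<^sub>v (\<epsilon> *\<^sub>v z) = A *\<^sub>v z"
      using A epsinv eps z ee2 by simp
    finally show "bform \<phi>' ((\<epsilon>inv * M0) *\<^sub>v g) z = g \<bullet> (A *\<^sub>v z)" .
  qed
qed




lemma cz_join: "z \<in> carrier_vec n \<Longrightarrow> cz n m (join n m z y g) = z"
  unfolding cz_def join_def by (intro eq_vecI) auto
lemma cy_join: "y \<in> carrier_vec m \<Longrightarrow> cy n m (join n m z y g) = y"
  unfolding cy_def join_def by (intro eq_vecI) auto
lemma cg_join: "g \<in> carrier_vec m \<Longrightarrow> cg n m (join n m z y g) = g"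
  unfolding cg_def join_def by (intro eq_vecI) auto
lemma join_split: "v \<in> carrier_vec (n + 2*m) \<Longrightarrow> join n m (cz n m v) (cy n m v) (cg n m v) = v"
  unfolding cz_def cy_def cg_def join_def by (intro eq_vecI) auto
lemma cz_car[simp]: "cz n m v \<in> carrier_vec n" unfolding cz_def by auto
lemma cy_car[simp]: "cy n m v \<in> carrier_vec m" unfolding cy_def by auto
lemma cg_car[simp]: "cg n m v \<in> carrier_vec m" unfolding cg_def by auto
lemma join_car[simp]: "join n m z y g \<in> carrier_vec (n + 2*m)" unfolding join_def by auto

lemma perp_mult: fixes X :: "'a::comm_ring_1 mat"
  assumes X: "X \<in> carrier_mat n n" and z: "z \<in> carrier_vec n" and y: "y \<in> carrier_vec m"
    and g: "g \<in> carrier_vec m"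
  shows "perp_id n m X *\<^sub>v join n m z y g = join n m (X *\<^sub>v z) y g"
proof -
  have yg: "y @\<^sub>v g \<in> carrier_vec (2*m)" using y g by (metis append_carrier_vec mult_2)
  have "perp_id n m X *\<^sub>v join n m z y g = X *\<^sub>v z @\<^sub>v 1\<^sub>m (2*m) *\<^sub>v (y @\<^sub>v g)"
    unfolding perp_id_def join_append[OF z y g]
    by (rule mult_mat_vec_split[OF X _ z yg]) simp
  also have "\<dots> = join n m (X *\<^sub>v z) y g"
    using join_append[of "X *\<^sub>v z" n y m g] X z y g yg by simp
  finally show ?thesis .
qed

lemma perp_car[simp]: "X \<in> carrier_mat n n \<Longrightarrow> perp_id n m X \<in> carrier_mat (n + 2*m) (n + 2*m)"
  unfolding perp_id_def by (metis four_block_carrier_mat one_carrier_mat zero_carrier_mat)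

lemma E_alpha_conj:
  fixes \<phi>s :: "'a::comm_ring_1 mat"
  assumes eps: "\<epsilon> \<in> carrier_mat n n" and epsinv: "\<epsilon>inv \<in> carrier_mat n n"
    and ei: "\<epsilon> * \<epsilon>inv = 1\<^sub>m n" "\<epsilon>inv * \<epsilon> = 1\<^sub>m n"
    and A: "A \<in> carrier_mat m n"
    and As': "adj_alpha \<phi>s n m (A * \<epsilon>inv) \<in> carrier_mat n m"
    and As: "adj_alpha \<phi>' n m A = \<epsilon>inv * adj_alpha \<phi>s n m (A * \<epsilon>inv)"
    and v: "v \<in> carrier_vec (n + 2*m)"
  shows "E_alpha \<phi>' n m A v = perp_id n m \<epsilon>inv *\<^sub>v E_alpha \<phi>s n m (A * \<epsilon>inv) (perp_id n m \<epsilon> *\<^sub>v v)"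
proof -
  define z where "z = cz n m v"
  define y where "y = cy n m v"
  define g where "g = cg n m v"
  define S where "S = adj_alpha \<phi>s n m (A * \<epsilon>inv)"
  have zc: "z \<in> carrier_vec n" and yc: "y \<in> carrier_vec m" and gc: "g \<in> carrier_vec m"
    unfolding z_def y_def g_def by auto
  have Sc: "S \<in> carrier_mat n m" using As' S_def by simp
  have vj: "v = join n m z y g" unfolding z_def y_def g_def using join_split[OF v] by simp
  have Pv: "perp_id n m \<epsilon> *\<^sub>v v = join n m (\<epsilon> *\<^sub>v z) y g"
    unfolding vj by (rule perp_mult[OF eps zc yc gc])
  have ez: "\<epsilon> *\<^sub>v z \<in> carrier_vec n" using eps zc by simp
  have e1: "\<epsilon>inv *\<^sub>v (\<epsilon> *\<^sub>v z - S *\<^sub>v g) = z - (\<epsilon>inv * S) *\<^sub>v g"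
    using eps epsinv zc gc Sc ei
    by (simp add: mult_minus_distrib_mat_vec[of \<epsilon>inv n n] assoc_mult_mat_vec[of \<epsilon>inv n n \<epsilon> n z, symmetric]
          assoc_mult_mat_vec[of \<epsilon>inv n n S m g]
         del: assoc_mult_mat_vec)
  have e2: "(A * \<epsilon>inv) *\<^sub>v (\<epsilon> *\<^sub>v z) = A *\<^sub>v z"
  proof -
    have "\<epsilon>inv *\<^sub>v (\<epsilon> *\<^sub>v z) = z"
      using assoc_mult_mat_vec[of \<epsilon>inv n n \<epsilon> n z] ei epsinv eps zc by simp
    then show ?thesis using assoc_mult_mat_vec[of A m n \<epsilon>inv n "\<epsilon> *\<^sub>v z"] A epsinv eps zc by simp
  qed
  have e3: "(A * \<epsilon>inv) *\<^sub>v (S *\<^sub>v g) = A *\<^sub>v ((\<epsilon>inv * S) *\<^sub>v g)"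
    using epsinv A Sc gc by simp
  have c1: "\<epsilon> *\<^sub>v z - S *\<^sub>v g \<in> carrier_vec n" using ez Sc gc by simp
  have c2: "y + (A * \<epsilon>inv) *\<^sub>v (\<epsilon> *\<^sub>v z) - half \<cdot>\<^sub>v ((A * \<epsilon>inv) *\<^sub>v (S *\<^sub>v g)) \<in> carrier_vec m"
    using yc A epsinv ez Sc gc by simp
  have "perp_id n m \<epsilon>inv *\<^sub>v E_alpha \<phi>s n m (A * \<epsilon>inv) (perp_id n m \<epsilon> *\<^sub>v v)
      = perp_id n m \<epsilon>inv *\<^sub>v join n m (\<epsilon> *\<^sub>v z - S *\<^sub>v g)
          (y + (A * \<epsilon>inv) *\<^sub>v (\<epsilon> *\<^sub>v z) - half \<cdot>\<^sub>v ((A * \<epsilon>inv) *\<^sub>v (S *\<^sub>v g))) g"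
    unfolding Pv E_alpha_def Let_def S_def cz_join[OF ez] cy_join[OF yc] cg_join[OF gc] ..
  also have "\<dots> = join n m (\<epsilon>inv *\<^sub>v (\<epsilon> *\<^sub>v z - S *\<^sub>v g))
          (y + (A * \<epsilon>inv) *\<^sub>v (\<epsilon> *\<^sub>v z) - half \<cdot>\<^sub>v ((A * \<epsilon>inv) *\<^sub>v (S *\<^sub>v g))) g"
    by (rule perp_mult[OF epsinv c1 c2 gc])
  also have "\<dots> = join n m (z - (\<epsilon>inv * S) *\<^sub>v g) (y + A *\<^sub>v z - half \<cdot>\<^sub>v (A *\<^sub>v ((\<epsilon>inv * S) *\<^sub>v g))) g"
    unfolding e1 e2 e3 ..
  also have "\<dots> = E_alpha \<phi>' n m A v"
    unfolding E_alpha_def Let_def As S_def z_def y_def g_def ..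
  finally show ?thesis ..
qed

lemma E_beta_conj:
  fixes \<phi>s :: "'a::comm_ring_1 mat"
  assumes eps: "\<epsilon> \<in> carrier_mat n n" and epsinv: "\<epsilon>inv \<in> carrier_mat n n"
    and ei: "\<epsilon> * \<epsilon>inv = 1\<^sub>m n" "\<epsilon>inv * \<epsilon> = 1\<^sub>m n"
    and A: "A \<in> carrier_mat m n"
    and As': "adj_beta \<phi>s n m (A * \<epsilon>inv) \<in> carrier_mat n m"
    and As: "adj_beta \<phi>' n m A = \<epsilon>inv * adj_beta \<phi>s n m (A * \<epsilon>inv)"
    and v: "v \<in> carrier_vec (n + 2*m)"
  shows "E_beta \<phi>' n m A v = perp_id n m \<epsilon>inv *\<^sub>v E_beta \<phi>s n m (A * \<epsilon>inv) (perp_id n m \<epsilon> *\<^sub>v v)"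
proof -
  define z where "z = cz n m v"
  define y where "y = cy n m v"
  define g where "g = cg n m v"
  define S where "S = adj_beta \<phi>s n m (A * \<epsilon>inv)"
  have zc: "z \<in> carrier_vec n" and yc: "y \<in> carrier_vec m" and gc: "g \<in> carrier_vec m"
    unfolding z_def y_def g_def by auto
  have Sc: "S \<in> carrier_mat n m" using As' S_def by simp
  have vj: "v = join n m z y g" unfolding z_def y_def g_def using join_split[OF v] by simp
  have Pv: "perp_id n m \<epsilon> *\<^sub>v v = join n m (\<epsilon> *\<^sub>v z) y g"
    unfolding vj by (rule perp_mult[OF eps zc yc gc])
  have ez: "\<epsilon> *\<^sub>v z \<in> carrier_vec n" using eps zc by simp
  have e1: "\<epsilon>inv *\<^sub>v (\<epsilon> *\<^sub>v z - S *\<^sub>v y) = z - (\<epsilon>inv * S) *\<^sub>v y"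
    using eps epsinv zc yc Sc ei
    by (simp add: mult_minus_distrib_mat_vec[of \<epsilon>inv n n] assoc_mult_mat_vec[of \<epsilon>inv n n \<epsilon> n z, symmetric]
          assoc_mult_mat_vec[of \<epsilon>inv n n S m y]
         del: assoc_mult_mat_vec)
  have e2: "(A * \<epsilon>inv) *\<^sub>v (\<epsilon> *\<^sub>v z) = A *\<^sub>v z"
  proof -
    have "\<epsilon>inv *\<^sub>v (\<epsilon> *\<^sub>v z) = z"
      using assoc_mult_mat_vec[of \<epsilon>inv n n \<epsilon> n z] ei epsinv eps zc by simp
    then show ?thesis using assoc_mult_mat_vec[of A m n \<epsilon>inv n "\<epsilon> *\<^sub>v z"] A epsinv eps zc by simp
  qed
  have e3: "(A * \<epsilon>inv) *\<^sub>v (S *\<^sub>v y) = A *\<^sub>v ((\<epsilon>inv * S) *\<^sub>v y)"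
    using epsinv A Sc yc by simp
  have c1: "\<epsilon> *\<^sub>v z - S *\<^sub>v y \<in> carrier_vec n" using ez Sc yc by simp
  have c2: "g + (A * \<epsilon>inv) *\<^sub>v (\<epsilon> *\<^sub>v z) - half \<cdot>\<^sub>v ((A * \<epsilon>inv) *\<^sub>v (S *\<^sub>v y)) \<in> carrier_vec m"
    using gc A epsinv ez Sc yc by simp
  have "perp_id n m \<epsilon>inv *\<^sub>v E_beta \<phi>s n m (A * \<epsilon>inv) (perp_id n m \<epsilon> *\<^sub>v v)
      = perp_id n m \<epsilon>inv *\<^sub>v join n m (\<epsilon> *\<^sub>v z - S *\<^sub>v y) y
          (g + (A * \<epsilon>inv) *\<^sub>v (\<epsilon> *\<^sub>v z) - half \<cdot>\<^sub>v ((A * \<epsilon>inv) *\<^sub>v (S *\<^sub>v y)))"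
    unfolding Pv E_beta_def Let_def S_def cz_join[OF ez] cy_join[OF yc] cg_join[OF gc] ..
  also have "\<dots> = join n m (\<epsilon>inv *\<^sub>v (\<epsilon> *\<^sub>v z - S *\<^sub>v y)) y
          (g + (A * \<epsilon>inv) *\<^sub>v (\<epsilon> *\<^sub>v z) - half \<cdot>\<^sub>v ((A * \<epsilon>inv) *\<^sub>v (S *\<^sub>v y)))"
    by (rule perp_mult[OF epsinv c1 yc c2])
  also have "\<dots> = join n m (z - (\<epsilon>inv * S) *\<^sub>v y) y (g + A *\<^sub>v z - half \<cdot>\<^sub>v (A *\<^sub>v ((\<epsilon>inv * S) *\<^sub>v y)))"
    unfolding e1 e2 e3 ..
  also have "\<dots> = E_beta \<phi>' n m A v"
    unfolding E_beta_def Let_def As S_def z_def y_def g_def ..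
  finally show ?thesis ..
qed




lemma lin_mat_car[simp]: "lin_mat N f \<in> carrier_mat N N"
  unfolding lin_mat_def by auto

lemma gen_group_car: assumes S: "S \<subseteq> carrier_mat N N" and x: "x \<in> gen_group N S"
  shows "x \<in> carrier_mat N N"
  using x by (induction rule: gen_group.induct) (use S in auto)

lemma PQW: fixes P :: "'a::comm_ring_1 mat"
  assumes "P \<in> carrier_mat N N" "Q \<in> carrier_mat N N" "P * Q = 1\<^sub>m N" "W \<in> carrier_mat N k"
  shows "P * (Q * W) = W"
  using assoc_mult_mat[OF assms(1,2,4), symmetric] assms(3,4) by simp

lemma conj_mult: fixes P :: "'a::comm_ring_1 mat"
  assumes P: "P \<in> carrier_mat N N" and Q: "Q \<in> carrier_mat N N" and PQ: "P * Q = 1\<^sub>m N"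
    and X: "X \<in> carrier_mat N N" and Y: "Y \<in> carrier_mat N N"
  shows "(Q * X * P) * (Q * Y * P) = Q * (X * Y) * P"
proof -
  have "(Q * X * P) * (Q * Y * P) = Q * (X * (P * (Q * (Y * P))))"
    using P Q X Y by (simp add: assoc_mult_mat[of _ N N _ N _ N])
  also have "P * (Q * (Y * P)) = Y * P" by (rule PQW[OF P Q PQ, of "Y * P" N]) (use Y P in simp)
  finally show ?thesis using P Q X Y by (simp add: assoc_mult_mat[of _ N N _ N _ N])
qed

lemma conj_back: fixes P :: "'a::comm_ring_1 mat"
  assumes P: "P \<in> carrier_mat N N" and Q: "Q \<in> carrier_mat N N" and PQ: "P * Q = 1\<^sub>m N"
    and X: "X \<in> carrier_mat N N"
  shows "P * (Q * X * P) * Q = X"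
proof -
  have "P * (Q * X * P) * Q = P * (Q * (X * (P * Q)))"
    using P Q X by (simp add: assoc_mult_mat[of _ N N _ N _ N])
  also have "\<dots> = X" using PQW[OF P Q PQ, of "X * (P * Q)" N] PQ X by simp
  finally show ?thesis .
qed

lemma conj_one: fixes P :: "'a::comm_ring_1 mat"
  assumes P: "P \<in> carrier_mat N N" and Q: "Q \<in> carrier_mat N N" and QP: "Q * P = 1\<^sub>m N"
  shows "Q * 1\<^sub>m N * P = 1\<^sub>m N"
  using assms by simp

lemma conj_gen: fixes P :: "'a::comm_ring_1 mat"
  assumes P: "P \<in> carrier_mat N N" and Q: "Q \<in> carrier_mat N N" and PQ: "P * Q = 1\<^sub>m N"
    and QP: "Q * P = 1\<^sub>m N" and S: "S \<subseteq> carrier_mat N N"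
  shows "gen_group N ((\<lambda>X. Q * X * P) ` S) = (\<lambda>X. Q * X * P) ` gen_group N S"
proof
  have cS: "(\<lambda>X. Q * X * P) ` S \<subseteq> carrier_mat N N" using S P Q by auto
  show "(\<lambda>X. Q * X * P) ` gen_group N S \<subseteq> gen_group N ((\<lambda>X. Q * X * P) ` S)"
  proof
    fix y assume "y \<in> (\<lambda>X. Q * X * P) ` gen_group N S"
    then obtain x where x: "x \<in> gen_group N S" and y: "y = Q * x * P" by auto
    have "Q * x * P \<in> gen_group N ((\<lambda>X. Q * X * P) ` S)" using x
    proof (induction rule: gen_group.induct)
      case gen_one
      then show ?case using gen_group.gen_one[of N] conj_one[OF P Q QP] by simp
    next
      case (gen_mult s x)
      have sc: "s \<in> carrier_mat N N" using gen_mult S by auto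
      have xc: "x \<in> carrier_mat N N" using gen_group_car[OF S gen_mult(2)] .
      have "Q * s * P * (Q * x * P) \<in> gen_group N ((\<lambda>X. Q * X * P) ` S)"
        by (rule gen_group.gen_mult) (use gen_mult in auto)
      then show ?case using conj_mult[OF P Q PQ sc xc] by simp
    next
      case (gen_inv s t x)
      have sc: "s \<in> carrier_mat N N" using gen_inv S by auto
      have xc: "x \<in> carrier_mat N N" using gen_group_car[OF S gen_inv(5)] .
      have tc: "t \<in> carrier_mat N N" using gen_inv by auto
      have "Q * t * P * (Q * x * P) \<in> gen_group N ((\<lambda>X. Q * X * P) ` S)"
      proof (rule gen_group.gen_inv[of "Q * s * P"])
        show "Q * s * P \<in> (\<lambda>X. Q * X * P) ` S" using gen_inv by auto
        show "Q * t * P \<in> carrier_mat N N" using P Q tc by auto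
        show "Q * s * P * (Q * t * P) = 1\<^sub>m N"
          using conj_mult[OF P Q PQ sc tc] gen_inv(3) conj_one[OF P Q QP] by simp
        show "Q * t * P * (Q * s * P) = 1\<^sub>m N"
          using conj_mult[OF P Q PQ tc sc] gen_inv(4) conj_one[OF P Q QP] by simp
        show "Q * x * P \<in> gen_group N ((\<lambda>X. Q * X * P) ` S)" by (rule gen_inv.IH)
      qed
      then show ?case using conj_mult[OF P Q PQ tc xc] by simp
    qed
    then show "y \<in> gen_group N ((\<lambda>X. Q * X * P) ` S)" using y by simp
  qed
  show "gen_group N ((\<lambda>X. Q * X * P) ` S) \<subseteq> (\<lambda>X. Q * X * P) ` gen_group N S"
  proof
    fix y assume "y \<in> gen_group N ((\<lambda>X. Q * X * P) ` S)"
    then show "y \<in> (\<lambda>X. Q * X * P) ` gen_group N S"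
    proof (induction rule: gen_group.induct)
      case gen_one
      then show ?case using gen_group.gen_one[of N S] conj_one[OF P Q QP] by (metis image_eqI)
    next
      case (gen_mult s' y)
      obtain s where s: "s \<in> S" "s' = Q * s * P" using gen_mult by auto
      obtain x where x: "x \<in> gen_group N S" "y = Q * x * P" using gen_mult by auto
      have sc: "s \<in> carrier_mat N N" using s S by auto
      have xc: "x \<in> carrier_mat N N" using gen_group_car[OF S x(1)] .
      have "s' * y = Q * (s * x) * P" using conj_mult[OF P Q PQ sc xc] s x by simp
      moreover have "s * x \<in> gen_group N S" by (rule gen_group.gen_mult[OF s(1) x(1)])
      ultimately show ?case by auto
    next
      case (gen_inv s' t y)
      obtain s where s: "s \<in> S" "s' = Q * s * P" using gen_inv by auto
      obtain x where x: "x \<in> gen_group N S" "y = Q * x * P" using gen_inv by auto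
      have sc: "s \<in> carrier_mat N N" using s S by auto
      have xc: "x \<in> carrier_mat N N" using gen_group_car[OF S x(1)] .
      have tc: "t \<in> carrier_mat N N" using gen_inv by auto
      define t0 where "t0 = P * t * Q"
      have t0c: "t0 \<in> carrier_mat N N" using P Q tc t0_def by auto
      have tt: "t = Q * t0 * P" unfolding t0_def using conj_back[OF Q P QP tc] by simp
      have ss: "s = P * s' * Q" unfolding s(2) using conj_back[OF P Q PQ sc] by simp
      have s's: "s' \<in> carrier_mat N N" using s(2) P Q sc by auto
      have "s * t0 = P * (s' * t) * Q" unfolding ss t0_def using conj_mult[OF Q P QP s's tc] by simp
      then have st: "s * t0 = 1\<^sub>m N" using gen_inv(3) conj_one[OF Q P PQ] by simp
      have "t0 * s = P * (t * s') * Q" unfolding ss t0_def using conj_mult[OF Q P QP tc s's] by simp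
      then have ts: "t0 * s = 1\<^sub>m N" using gen_inv(4) conj_one[OF Q P PQ] by simp
      have "t0 * x \<in> gen_group N S" by (rule gen_group.gen_inv[OF s(1) t0c st ts x(1)])
      moreover have "t * y = Q * (t0 * x) * P" using conj_mult[OF P Q PQ t0c xc] tt x by simp
      ultimately show ?case by auto
    qed
  qed
qed




lemma conj_inj: fixes P :: "'a::comm_ring_1 mat"
  assumes P: "P \<in> carrier_mat N N" and Q: "Q \<in> carrier_mat N N" and PQ: "P * Q = 1\<^sub>m N"
    and X: "X \<in> carrier_mat N N" and Y: "Y \<in> carrier_mat N N" and eq: "Q * X * P = Q * Y * P"
  shows "X = Y"
  by (metis conj_back[OF P Q PQ X] conj_back[OF P Q PQ Y] eq)

lemma conj_inv_iff: fixes P :: "'a::comm_ring_1 mat"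
  assumes P: "P \<in> carrier_mat N N" and Q: "Q \<in> carrier_mat N N" and PQ: "P * Q = 1\<^sub>m N"
    and QP: "Q * P = 1\<^sub>m N"
    and X: "X \<in> carrier_mat N N" and Y: "Y \<in> carrier_mat N N"
  shows "(Q * X * P) * (Q * Y * P) = 1\<^sub>m N \<longleftrightarrow> X * Y = 1\<^sub>m N"
proof -
  have XY: "X * Y \<in> carrier_mat N N" using X Y by simp
  have "(Q * X * P) * (Q * Y * P) = Q * (X * Y) * P" by (rule conj_mult[OF P Q PQ X Y])
  moreover have c1: "Q * 1\<^sub>m N * P = 1\<^sub>m N" by (rule conj_one[OF P Q QP])
  ultimately show ?thesis
    using conj_inj[OF P Q PQ XY one_carrier_mat] by metis
qed


lemma normal_conj: fixes P :: "'a::comm_ring_1 mat"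
  assumes P: "P \<in> carrier_mat N N" and Q: "Q \<in> carrier_mat N N" and PQ: "P * Q = 1\<^sub>m N"
    and QP: "Q * P = 1\<^sub>m N" and G: "G \<subseteq> carrier_mat N N" and H: "H \<subseteq> carrier_mat N N"
  shows "normal_closure N ((\<lambda>X. Q * X * P) ` G) ((\<lambda>X. Q * X * P) ` H)
       = (\<lambda>X. Q * X * P) ` normal_closure N G H"
proof -
  let ?c = "\<lambda>X. Q * X * P"
  let ?T = "{g * h * g' | g h g'. g \<in> G \<and> h \<in> H \<and> g' \<in> carrier_mat N N \<and> g * g' = 1\<^sub>m N \<and> g' * g = 1\<^sub>m N}"
  let ?Tc = "{g * h * g' | g h g'. g \<in> ?c ` G \<and> h \<in> ?c ` H \<and> g' \<in> carrier_mat N N \<and> g * g' = 1\<^sub>m N \<and> g' * g = 1\<^sub>m N}"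
  have T: "?T \<subseteq> carrier_mat N N"
  proof
    fix x assume "x \<in> ?T"
    then obtain g h g' where "g \<in> G" "h \<in> H" "g' \<in> carrier_mat N N" "x = g * h * g'" by blast
    then have "g \<in> carrier_mat N N" "h \<in> carrier_mat N N" "g' \<in> carrier_mat N N" "x = g * h * g'"
      using G H by auto
    then show "x \<in> carrier_mat N N" by simp
  qed
  have eq: "?Tc = ?c ` ?T"
  proof
    show "?Tc \<subseteq> ?c ` ?T"
    proof
      fix x assume "x \<in> ?Tc"
      then obtain g h g' where g: "g \<in> ?c ` G" and h: "h \<in> ?c ` H" and g'c: "g' \<in> carrier_mat N N"
        and i1': "g * g' = 1\<^sub>m N" and i2': "g' * g = 1\<^sub>m N" and x': "x = g * h * g'"
        by auto
      from g obtain g0 where g0: "g0 \<in> G" and gd: "g = ?c g0" by auto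
      from h obtain h0 where h0: "h0 \<in> H" and hd: "h = ?c h0" by auto
      have i1: "?c g0 * g' = 1\<^sub>m N" using i1' gd by simp
      have i2: "g' * ?c g0 = 1\<^sub>m N" using i2' gd by simp
      have x: "x = ?c g0 * ?c h0 * g'" using x' gd hd by simp
      have g0c: "g0 \<in> carrier_mat N N" and h0c: "h0 \<in> carrier_mat N N" using g0 h0 G H by auto
      define g0' where "g0' = P * g' * Q"
      have g0'c: "g0' \<in> carrier_mat N N" using P Q g'c g0'_def by auto
      have gg: "?c g0' = g'" unfolding g0'_def by (rule conj_back[OF Q P QP g'c])
      have j1: "g0 * g0' = 1\<^sub>m N" using i1 conj_inv_iff[OF P Q PQ QP g0c g0'c] gg by simp
      have j2: "g0' * g0 = 1\<^sub>m N" using i2 conj_inv_iff[OF P Q PQ QP g0'c g0c] gg by simp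
      have gh: "g0 * h0 \<in> carrier_mat N N" using g0c h0c by simp
      have "x = ?c (g0 * h0) * ?c g0'" unfolding x gg conj_mult[OF P Q PQ g0c h0c] ..
      also have "\<dots> = ?c (g0 * h0 * g0')" by (rule conj_mult[OF P Q PQ gh g0'c])
      finally have xx: "x = ?c (g0 * h0 * g0')" .
      have "g0 * h0 * g0' \<in> ?T" using g0 h0 g0'c j1 j2 by blast
      then show "x \<in> ?c ` ?T" unfolding xx by (rule imageI)
    qed
    show "?c ` ?T \<subseteq> ?Tc"
    proof
      fix x assume "x \<in> ?c ` ?T"
      then obtain y where y: "y \<in> ?T" and xy: "x = ?c y" by blast
      from y obtain g0 h0 g0' where g0: "g0 \<in> G" and h0: "h0 \<in> H" and g0'c: "g0' \<in> carrier_mat N N"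
        and j1: "g0 * g0' = 1\<^sub>m N" and j2: "g0' * g0 = 1\<^sub>m N" and yy: "y = g0 * h0 * g0'"
        by blast
      have x: "x = ?c (g0 * h0 * g0')" using xy yy by simp
      have g0c: "g0 \<in> carrier_mat N N" and h0c: "h0 \<in> carrier_mat N N" using g0 h0 G H by auto
      have gh: "g0 * h0 \<in> carrier_mat N N" using g0c h0c by simp
      have "x = ?c (g0 * h0) * ?c g0'" unfolding x by (rule conj_mult[OF P Q PQ gh g0'c, symmetric])
      also have "\<dots> = ?c g0 * ?c h0 * ?c g0'" unfolding conj_mult[OF P Q PQ g0c h0c] ..
      finally have x': "x = ?c g0 * ?c h0 * ?c g0'" .
      have "?c g0 * ?c g0' = 1\<^sub>m N" using conj_inv_iff[OF P Q PQ QP g0c g0'c] j1 by simp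
      moreover have "?c g0' * ?c g0 = 1\<^sub>m N" using conj_inv_iff[OF P Q PQ QP g0'c g0c] j2 by simp
      moreover have "?c g0' \<in> carrier_mat N N" using P Q g0'c by auto
      moreover have "?c g0 \<in> ?c ` G" "?c h0 \<in> ?c ` H" using g0 h0 by auto
      ultimately show "x \<in> ?Tc" unfolding x' by blast
    qed
  qed
  show ?thesis unfolding normal_closure_def eq by (rule conj_gen[OF P Q PQ QP T])
qed

lemma perp_inv: fixes e :: "'a::comm_ring_1 mat"
  assumes e: "e \<in> carrier_mat n n" and f: "f \<in> carrier_mat n n" and ef: "e * f = 1\<^sub>m n"
  shows "perp_id n m e * perp_id n m f = 1\<^sub>m (n + 2*m)"
proof -
  have "perp_id n m e * perp_id n m f = four_block_mat (e * f + 0\<^sub>m n (2*m) * 0\<^sub>m (2*m) n)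
     (e * 0\<^sub>m n (2*m) + 0\<^sub>m n (2*m) * 1\<^sub>m (2*m)) (0\<^sub>m (2*m) n * f + 1\<^sub>m (2*m) * 0\<^sub>m (2*m) n)
     (0\<^sub>m (2*m) n * 0\<^sub>m n (2*m) + 1\<^sub>m (2*m) * 1\<^sub>m (2*m))"
    unfolding perp_id_def by (rule mult_four_block_mat) (use e f in auto)
  also have "\<dots> = four_block_mat (1\<^sub>m n) (0\<^sub>m n (2*m)) (0\<^sub>m (2*m) n) (1\<^sub>m (2*m))"
    using e f ef by simp
  also have "\<dots> = 1\<^sub>m (n + 2*m)" by simp
  finally show ?thesis .
qed




locale setting =
  fixes n m :: nat and \<phi>' \<phi>s \<psi>' \<psi>s \<epsilon> \<epsilon>inv :: "'a::comm_ring_1 mat"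
  assumes phi'_car: "\<phi>' \<in> carrier_mat n n" and phi'_sym: "transpose_mat \<phi>' = \<phi>'"
    and psi'_car: "\<psi>' \<in> carrier_mat n n" and inv': "\<phi>' * \<psi>' = 1\<^sub>m n"
    and phis_car: "\<phi>s \<in> carrier_mat n n" and phis_sym: "transpose_mat \<phi>s = \<phi>s"
    and psis_car: "\<psi>s \<in> carrier_mat n n" and invs: "\<phi>s * \<psi>s = 1\<^sub>m n"
    and eps: "\<epsilon> \<in> carrier_mat n n" and epsinv: "\<epsilon>inv \<in> carrier_mat n n"
    and ei1: "\<epsilon> * \<epsilon>inv = 1\<^sub>m n" and ei2: "\<epsilon>inv * \<epsilon> = 1\<^sub>m n"
    and congr: "\<phi>' = transpose_mat \<epsilon> * \<phi>s * \<epsilon>"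
begin

abbreviation "PP \<equiv> perp_id n m \<epsilon>"
abbreviation "QQ \<equiv> perp_id n m \<epsilon>inv"

lemma PPc: "PP \<in> carrier_mat (n + 2*m) (n + 2*m)" using eps by simp
lemma QQc: "QQ \<in> carrier_mat (n + 2*m) (n + 2*m)" using epsinv by simp
lemma PQ: "PP * QQ = 1\<^sub>m (n + 2*m)" by (rule perp_inv[OF eps epsinv ei1])
lemma QP: "QQ * PP = 1\<^sub>m (n + 2*m)" by (rule perp_inv[OF epsinv eps ei2])

lemma adjA: "A \<in> carrier_mat m n \<Longrightarrow> adj_alpha \<phi>' n m A = \<epsilon>inv * adj_alpha \<phi>s n m (A * \<epsilon>inv)"
  by (rule adj_transform[OF phis_car phis_sym psis_car invs phi'_car phi'_sym psi'_car inv'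
        eps epsinv ei1 ei2 congr])

lemma adjcar: "A \<in> carrier_mat m n \<Longrightarrow> adj_alpha \<phi>s n m A \<in> carrier_mat n m"
  using adj_alpha_char[OF phis_car phis_sym psis_car invs] unfolding adjP_def by blast

lemma conj_vec:
  assumes L: "L \<in> carrier_mat (n + 2*m) (n + 2*m)" and v: "v \<in> carrier_vec (n + 2*m)"
  shows "(QQ * L * PP) *\<^sub>v v = QQ *\<^sub>v (L *\<^sub>v (PP *\<^sub>v v))"
proof -
  have QL: "QQ * L \<in> carrier_mat (n + 2*m) (n + 2*m)" using QQc L by simp
  have "(QQ * L * PP) *\<^sub>v v = (QQ * L) *\<^sub>v (PP *\<^sub>v v)"
    by (rule assoc_mult_mat_vec[OF QL PPc v])
  also have "\<dots> = QQ *\<^sub>v (L *\<^sub>v (PP *\<^sub>v v))"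
    by (rule assoc_mult_mat_vec[OF QQc L]) (use PPc v in simp)
  finally show ?thesis .
qed

lemma lin_alpha: assumes A: "A \<in> carrier_mat m n"
  shows "lin_mat (n + 2*m) (E_alpha \<phi>' n m A) = QQ * lin_mat (n + 2*m) (E_alpha \<phi>s n m (A * \<epsilon>inv)) * PP"
proof -
  have A': "A * \<epsilon>inv \<in> carrier_mat m n" using A epsinv by simp
  have ml: "matlin (n+2*m) (n+2*m) (E_alpha \<phi>s n m (A * \<epsilon>inv))"
    by (rule matlin_E_alpha[OF A' adjcar[OF A']])
  note L = matlin_lin_mat[OF ml]
  show ?thesis
  proof (rule lin_mat_eq)
    show "QQ * lin_mat (n + 2*m) (E_alpha \<phi>s n m (A * \<epsilon>inv)) * PP \<in> carrier_mat (n + 2*m) (n + 2*m)"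
      by (rule mult_carrier_mat[OF mult_carrier_mat[OF QQc L(1)] PPc])
    show "\<forall>v\<in>carrier_vec (n + 2 * m). E_alpha \<phi>' n m A v =
        (QQ * lin_mat (n + 2*m) (E_alpha \<phi>s n m (A * \<epsilon>inv)) * PP) *\<^sub>v v"
    proof
      fix v :: "'a vec" assume v: "v \<in> carrier_vec (n + 2*m)"
      have Pv: "PP *\<^sub>v v \<in> carrier_vec (n + 2*m)" using PPc v by simp
      show "E_alpha \<phi>' n m A v = (QQ * lin_mat (n + 2*m) (E_alpha \<phi>s n m (A * \<epsilon>inv)) * PP) *\<^sub>v v"
        unfolding conj_vec[OF L(1) v] L(2)[OF Pv, symmetric]
        by (rule E_alpha_conj[OF eps epsinv ei1 ei2 A adjcar[OF A'] adjA[OF A] v])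
    qed
  qed
qed

lemma lin_beta: assumes A: "A \<in> carrier_mat m n"
  shows "lin_mat (n + 2*m) (E_beta \<phi>' n m A) = QQ * lin_mat (n + 2*m) (E_beta \<phi>s n m (A * \<epsilon>inv)) * PP"
proof -
  have A': "A * \<epsilon>inv \<in> carrier_mat m n" using A epsinv by simp
  have b1: "adj_beta \<phi>s n m (A * \<epsilon>inv) \<in> carrier_mat n m"
    unfolding adj_beta_eq[OF A'] by (rule adjcar[OF A'])
  have b2: "adj_beta \<phi>' n m A = \<epsilon>inv * adj_beta \<phi>s n m (A * \<epsilon>inv)"
    unfolding adj_beta_eq[OF A'] adj_beta_eq[OF A] by (rule adjA[OF A])
  have ml: "matlin (n+2*m) (n+2*m) (E_beta \<phi>s n m (A * \<epsilon>inv))"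
    by (rule matlin_E_beta[OF A' b1])
  note L = matlin_lin_mat[OF ml]
  show ?thesis
  proof (rule lin_mat_eq)
    show "QQ * lin_mat (n + 2*m) (E_beta \<phi>s n m (A * \<epsilon>inv)) * PP \<in> carrier_mat (n + 2*m) (n + 2*m)"
      by (rule mult_carrier_mat[OF mult_carrier_mat[OF QQc L(1)] PPc])
    show "\<forall>v\<in>carrier_vec (n + 2 * m). E_beta \<phi>' n m A v =
        (QQ * lin_mat (n + 2*m) (E_beta \<phi>s n m (A * \<epsilon>inv)) * PP) *\<^sub>v v"
    proof
      fix v :: "'a vec" assume v: "v \<in> carrier_vec (n + 2*m)"
      have Pv: "PP *\<^sub>v v \<in> carrier_vec (n + 2*m)" using PPc v by simp
      show "E_beta \<phi>' n m A v = (QQ * lin_mat (n + 2*m) (E_beta \<phi>s n m (A * \<epsilon>inv)) * PP) *\<^sub>v v"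
        unfolding conj_vec[OF L(1) v] L(2)[OF Pv, symmetric]
        by (rule E_beta_conj[OF eps epsinv ei1 ei2 A b1 b2 v])
    qed
  qed
qed

definition condJ :: "'a set \<Rightarrow> 'a mat \<Rightarrow> bool" where
  "condJ J A \<longleftrightarrow> A \<in> carrier_mat m n \<and> (\<forall>z\<in>carrier_vec n. A *\<^sub>v z \<in> ideal_vecs m J)"

lemma condJ_inv: assumes "condJ J A" shows "condJ J (A * \<epsilon>inv)"
  unfolding condJ_def
proof (intro conjI ballI)
  have A: "A \<in> carrier_mat m n" using assms condJ_def by auto
  show "A * \<epsilon>inv \<in> carrier_mat m n" using A epsinv by simp
  fix z :: "'a vec" assume z: "z \<in> carrier_vec n"
  have "(A * \<epsilon>inv) *\<^sub>v z = A *\<^sub>v (\<epsilon>inv *\<^sub>v z)" by (rule assoc_mult_mat_vec[OF A epsinv z])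
  moreover have "\<epsilon>inv *\<^sub>v z \<in> carrier_vec n" using epsinv z by simp
  ultimately show "(A * \<epsilon>inv) *\<^sub>v z \<in> ideal_vecs m J" using assms unfolding condJ_def by simp
qed

lemma condJ_eps: assumes "condJ J A" shows "condJ J (A * \<epsilon>)"
  unfolding condJ_def
proof (intro conjI ballI)
  have A: "A \<in> carrier_mat m n" using assms condJ_def by auto
  show "A * \<epsilon> \<in> carrier_mat m n" using A eps by simp
  fix z :: "'a vec" assume z: "z \<in> carrier_vec n"
  have "(A * \<epsilon>) *\<^sub>v z = A *\<^sub>v (\<epsilon> *\<^sub>v z)" by (rule assoc_mult_mat_vec[OF A eps z])
  moreover have "\<epsilon> *\<^sub>v z \<in> carrier_vec n" using eps z by simp
  ultimately show "(A * \<epsilon>) *\<^sub>v z \<in> ideal_vecs m J" using assms unfolding condJ_def by simp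
qed

lemma eps_cancel: assumes "A \<in> carrier_mat m n" shows "A * \<epsilon> * \<epsilon>inv = A"
  using assms eps epsinv ei1 by simp

lemma set_conj:
  assumes lin: "\<And>A. A \<in> carrier_mat m n \<Longrightarrow> F' A = QQ * F (A * \<epsilon>inv) * PP"
  shows "{F' A | A. condJ J A} = (\<lambda>X. QQ * X * PP) ` {F A | A. condJ J A}"
proof
  show "{F' A | A. condJ J A} \<subseteq> (\<lambda>X. QQ * X * PP) ` {F A | A. condJ J A}"
  proof
    fix x assume "x \<in> {F' A | A. condJ J A}"
    then obtain A where A: "condJ J A" and x: "x = F' A" by blast
    have Ac: "A \<in> carrier_mat m n" using A condJ_def by auto
    have "x = QQ * F (A * \<epsilon>inv) * PP" using lin[OF Ac] x by simp
    moreover have "F (A * \<epsilon>inv) \<in> {F A | A. condJ J A}" using condJ_inv[OF A] by blast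
    ultimately show "x \<in> (\<lambda>X. QQ * X * PP) ` {F A | A. condJ J A}" by blast
  qed
  show "(\<lambda>X. QQ * X * PP) ` {F A | A. condJ J A} \<subseteq> {F' A | A. condJ J A}"
  proof
    fix x assume "x \<in> (\<lambda>X. QQ * X * PP) ` {F A | A. condJ J A}"
    then obtain B where B: "condJ J B" and x: "x = QQ * F B * PP" by blast
    have Bc: "B \<in> carrier_mat m n" using B condJ_def by auto
    have BE: "condJ J (B * \<epsilon>)" by (rule condJ_eps[OF B])
    have "B * \<epsilon> \<in> carrier_mat m n" using BE condJ_def by auto
    then have "F' (B * \<epsilon>) = QQ * F B * PP" using lin eps_cancel[OF Bc] by simp
    then have "x = F' (B * \<epsilon>)" using x by simp
    then show "x \<in> {F' A | A. condJ J A}" using BE by blast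
  qed
qed

lemma gens: "EO_gens \<phi>' n m J = (\<lambda>X. QQ * X * PP) ` EO_gens \<phi>s n m J"
proof -
  have e: "EO_gens \<phi> n m J = {lin_mat (n + 2 * m) (E_alpha \<phi> n m A) | A. condJ J A}
     \<union> {lin_mat (n + 2 * m) (E_beta \<phi> n m A) | A. condJ J A}" for \<phi>
    unfolding EO_gens_def condJ_def by simp
  show ?thesis unfolding e image_Un
    using set_conj[of "\<lambda>A. lin_mat (n + 2 * m) (E_alpha \<phi>' n m A)" "\<lambda>A. lin_mat (n + 2 * m) (E_alpha \<phi>s n m A)" J]
      set_conj[of "\<lambda>A. lin_mat (n + 2 * m) (E_beta \<phi>' n m A)" "\<lambda>A. lin_mat (n + 2 * m) (E_beta \<phi>s n m A)" J]
      lin_alpha lin_beta by simp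
qed

lemma gens_car: "EO_gens \<phi> n m J \<subseteq> carrier_mat (n + 2*m) (n + 2*m)"
  unfolding EO_gens_def by auto

lemma EO_conj: "EO \<phi>' n m J = (\<lambda>X. QQ * X * PP) ` EO \<phi>s n m J"
  unfolding EO_def gens by (rule conj_gen[OF PPc QQc PQ QP gens_car])

lemma EO_car: "EO \<phi> n m J \<subseteq> carrier_mat (n + 2*m) (n + 2*m)"
  unfolding EO_def using gen_group_car[OF gens_car] by blast

lemma EO_rel_conj: "EO_rel \<phi>' n m I = (\<lambda>X. QQ * X * PP) ` EO_rel \<phi>s n m I"
  unfolding EO_rel_def EO_conj by (rule normal_conj[OF PPc QQc PQ QP EO_car EO_car])

end


theorem mainTheorem15:
  fixes I :: "'a::comm_ring_1 set" and n m :: nat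
    and \<phi>' \<phi>s \<epsilon> \<epsilon>inv :: "'a mat"
  assumes two_inv: "\<exists>u::'a. 2 * u = 1"
    and ideal: "is_ideal I"
    and m: "m \<ge> 1"
    and phi'_car: "\<phi>' \<in> carrier_mat n n" and phi'_sym: "transpose_mat \<phi>' = \<phi>'"
    and phi'_inv: "\<exists>\<psi>. \<psi> \<in> carrier_mat n n \<and> \<phi>' * \<psi> = 1\<^sub>m n \<and> \<psi> * \<phi>' = 1\<^sub>m n"
    and phis_car: "\<phi>s \<in> carrier_mat n n" and phis_sym: "transpose_mat \<phi>s = \<phi>s"
    and phis_inv: "\<exists>\<psi>. \<psi> \<in> carrier_mat n n \<and> \<phi>s * \<psi> = 1\<^sub>m n \<and> \<psi> * \<phi>s = 1\<^sub>m n"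
    and eps_car: "\<epsilon> \<in> carrier_mat n n" and epsinv_car: "\<epsilon>inv \<in> carrier_mat n n"
    and eps_inv: "\<epsilon> * \<epsilon>inv = 1\<^sub>m n" "\<epsilon>inv * \<epsilon> = 1\<^sub>m n"
    and congr: "\<phi>' = transpose_mat \<epsilon> * \<phi>s * \<epsilon>"
  shows "EO_rel \<phi>' n m I =
    {perp_id n m \<epsilon>inv * M * perp_id n m \<epsilon> | M. M \<in> EO_rel \<phi>s n m I}"
proof -
  obtain \<psi>' where p1: "\<psi>' \<in> carrier_mat n n" "\<phi>' * \<psi>' = 1\<^sub>m n" using phi'_inv by blast
  obtain \<psi>s where p2: "\<psi>s \<in> carrier_mat n n" "\<phi>s * \<psi>s = 1\<^sub>m n" using phis_inv by blast
  interpret S: setting n m \<phi>' \<phi>s \<psi>' \<psi>s \<epsilon> \<epsilon>inv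
    by unfold_locales (use phi'_car phi'_sym phis_car phis_sym eps_car epsinv_car eps_inv congr p1 p2 in auto)
  have "EO_rel \<phi>' n m I = (\<lambda>X. perp_id n m \<epsilon>inv * X * perp_id n m \<epsilon>) ` EO_rel \<phi>s n m I"
    by (rule S.EO_rel_conj)
  then show ?thesis by blast
qed

end
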